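(* Let $d\ge2$, let $p,q\in\mathbb{H}^d$, and let $t$ be the highest point (maximal $z$-coordinate) on the geodesic segment $pq$. Let $C_t$ be the tile of $T^0$ containing $t$, and let $\pi_x(C_t)\subset\mathbb{R}^{d-1}$ be its projection to the $x$-coordinates. Then the Euclidean diameter of $\pi_x(C_t)$ is strictly greater than $\|x(p)-x(q)\|/4$.
   Context: Half-space model: points of $\mathbb{H}^d$ are $(x,z)\in\mathbb{R}^{d-1}\times\mathbb{R}_{>0}$; geodesics are vertical segments or arcs of Euclidean circles orthogonal to $\{z=0\}$. Binary tiling $T^0$: let $C_0$ be the Euclidean box $[0,\tfrac{1}{\sqrt{d-1}}]^{d-1}\times[1,2]$; the tiles of $T^0$ are the images of $C_0$ under $(x,z)\mapsto\sigma\cdot(x+\tau,z)$ for all $\tau=a/\sqrt{d-1}$, $a\in\mathbb{Z}^{d-1}$, and $\sigma=2^b$, $b\in\mathbb{Z}$. $\|\cdot\|$ is the Euclidean norm on $\mathbb{R}^{d-1}$. *)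

theory Defs
  imports "HOL-Analysis.Analysis"
begin

text \<open>Upper half-space model of H^d with d - 1 = CARD('n) (so d \<ge> 2 automatically).
  A point is a pair (x, z) with x :: real^'n and z > 0.\<close>

definition in_H :: "(real^'n) \<times> real \<Rightarrow> bool" where
  "in_H p \<longleftrightarrow> snd p > 0"

text \<open>Geodesic segment between p and q in the half-space model: a vertical segment
  if x(p) = x(q); otherwise the arc, between p and q, of the Euclidean circle through p and q
  lying in the vertical plane over the line through x(p), x(q), centred on {z = 0}.\<close>

definition geodesic_segment :: "(real^'n) \<times> real \<Rightarrow> (real^'n) \<times> real \<Rightarrow> ((real^'n) \<times> real) set" where
  "geodesic_segment p q =
    (if fst p = fst q then
       {(x, z). x = fst p \<and> min (snd p) (snd q) \<le> z \<and> z \<le> max (snd p) (snd q)}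
     else
       {(x, z). z > 0 \<and>
          (\<exists>s::real. 0 \<le> s \<and> s \<le> 1 \<and> x = fst p + s *\<^sub>R (fst q - fst p)) \<and>
          (\<exists>c::real^'n. (\<exists>\<mu>::real. c = fst p + \<mu> *\<^sub>R (fst q - fst p)) \<and>
              (norm (fst p - c))\<^sup>2 + (snd p)\<^sup>2 = (norm (fst q - c))\<^sup>2 + (snd q)\<^sup>2 \<and>
              (norm (x - c))\<^sup>2 + z\<^sup>2 = (norm (fst p - c))\<^sup>2 + (snd p)\<^sup>2)})"

text \<open>Tile of the binary tiling T^0 with translation a/sqrt(d-1) and scale 2^b:
  image of [0,1/sqrt(d-1)]^(d-1) \<times> [1,2] under (x,z) \<mapsto> 2^b (x + a/sqrt(d-1), z).\<close>

definition bin_tile :: "int^'n \<Rightarrow> int \<Rightarrow> ((real^'n) \<times> real) set" where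
  "bin_tile a b =
    {(x, z). (\<forall>i. (2 powi b) * (of_int (a $ i) / sqrt (real CARD('n))) \<le> x $ i \<and>
                   x $ i \<le> (2 powi b) * ((of_int (a $ i) + 1) / sqrt (real CARD('n)))) \<and>
             (2 powi b) \<le> z \<and> z \<le> (2 powi b) * 2}"

definition binary_tiling :: "((real^'n) \<times> real) set set" where
  "binary_tiling = {C. \<exists>a b. C = bin_tile a b}"

end

theory Submission
  imports Defs
begin

lemma tile_diam:
  fixes a :: "int^'n" and b :: int
  shows "diameter (fst ` bin_tile a b) \<ge> 2 powi b"
proof -
  define \<sigma> where "\<sigma> = (2::real) powi b"
  define n where "n = real CARD('n)"
  have npos: "n > 0" unfolding n_def by simp
  have spos: "\<sigma> > 0" unfolding \<sigma>_def by simp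
  define v0 :: "real^'n" where "v0 = (\<chi> i. \<sigma> * (of_int (a $ i) / sqrt n))"
  define v1 :: "real^'n" where "v1 = (\<chi> i. \<sigma> * ((of_int (a $ i) + 1) / sqrt n))"
  have le: "v0 $ i \<le> v1 $ i" for i
    unfolding v0_def v1_def using spos npos
    by (simp add: divide_right_mono mult_left_mono)
  have in0: "v0 \<in> fst ` bin_tile a b"
    unfolding bin_tile_def image_iff
    by (rule bexI[of _ "(v0, \<sigma>)"]) (use le spos in \<open>auto simp: \<sigma>_def n_def v0_def v1_def\<close>)
  have in1: "v1 \<in> fst ` bin_tile a b"
    unfolding bin_tile_def image_iff
    by (rule bexI[of _ "(v1, \<sigma>)"]) (use le spos in \<open>auto simp: \<sigma>_def n_def v0_def v1_def\<close>)
  have sub: "fst ` bin_tile a b \<subseteq> cbox v0 v1"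
    by (auto simp: mem_box_cart bin_tile_def v0_def v1_def \<sigma>_def n_def)
  have bnd: "bounded (fst ` bin_tile a b)"
    using sub bounded_cbox bounded_subset by blast
  have diff: "v1 - v0 = (\<chi> i. \<sigma> / sqrt n)"
    unfolding v0_def v1_def by (simp add: vec_eq_iff add_divide_distrib algebra_simps)
  have "(norm (v1 - v0))\<^sup>2 = n * (\<sigma> / sqrt n)\<^sup>2"
    unfolding diff power2_norm_eq_inner inner_vec_def by (simp add: n_def power2_eq_square)
  also have "\<dots> = \<sigma>\<^sup>2" using npos by (simp add: power_divide)
  finally have "norm (v1 - v0) = \<sigma>" using spos
    by (metis norm_ge_zero power2_eq_iff_nonneg less_imp_le)
  hence "dist v1 v0 = \<sigma>" by (simp add: dist_norm)
  thus ?thesis using diameter_bounded_bound[OF bnd in1 in0] by (simp add: \<sigma>_def)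
qed


lemma high_point:
  fixes p q :: "(real^'n) \<times> real"
  assumes "in_H p" and "in_H q" and ne: "fst p \<noteq> fst q"
  shows "\<exists>s \<in> geodesic_segment p q. snd s > norm (fst p - fst q) / 2"
proof -
  obtain xp zp xq zq where P: "p = (xp, zp)" and Q: "q = (xq, zq)" by (cases p, cases q)
  have zp: "zp > 0" and zq: "zq > 0" using assms P Q by (auto simp: in_H_def)
  have ne': "xp \<noteq> xq" using ne P Q by simp
  define D where "D = norm (xp - xq)"
  have Dpos: "D > 0" using ne' by (simp add: D_def)
  have Dq: "norm (xq - xp) = D" by (simp add: D_def norm_minus_commute)
  define \<mu> where "\<mu> = ((zq\<^sup>2 - zp\<^sup>2) / D\<^sup>2 + 1) / 2"
  define c where "c = xp + \<mu> *\<^sub>R (xq - xp)"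
  have n1: "norm (xp - c) = \<bar>\<mu>\<bar> * D"
    unfolding c_def by (simp add: Dq)
  have "xq - c = (1 - \<mu>) *\<^sub>R (xq - xp)" unfolding c_def by (simp add: algebra_simps)
  hence n2: "norm (xq - c) = \<bar>1 - \<mu>\<bar> * D" by (simp add: Dq)
  have eqc: "(\<mu> * D)\<^sup>2 + zp\<^sup>2 = ((1 - \<mu>) * D)\<^sup>2 + zq\<^sup>2"
    using Dpos unfolding \<mu>_def by (simp add: power2_eq_square field_simps)
  have eq: "(norm (xp - c))\<^sup>2 + zp\<^sup>2 = (norm (xq - c))\<^sup>2 + zq\<^sup>2"
    using eqc unfolding n1 n2 by (simp add: power_mult_distrib)
  have mem: "(x, z) \<in> geodesic_segment p q"
    if "z > 0" "0 \<le> s" "s \<le> 1" "x = xp + s *\<^sub>R (xq - xp)"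
       "(norm (x - c))\<^sup>2 + z\<^sup>2 = (norm (xp - c))\<^sup>2 + zp\<^sup>2" for x z s
    unfolding geodesic_segment_def P Q using ne' that eq
    by (auto simp: c_def)
  have pm: "p \<in> geodesic_segment p q"
    using mem[of zp 0 xp] zp P by auto
  have qm: "q \<in> geodesic_segment p q"
    using mem[of zq 1 xq] zq eq Q by auto
  consider "\<mu> < 0" | "0 \<le> \<mu>" "\<mu> \<le> 1" | "\<mu> > 1" by linarith
  thus ?thesis
  proof cases
    case 1
    have "zp\<^sup>2 = (1 - 2*\<mu>) * D\<^sup>2 + zq\<^sup>2" using eqc by (simp add: power2_eq_square algebra_simps)
    also have "\<dots> > D\<^sup>2" using 1 zq Dpos
      by (smt (verit) mult_le_cancel_right1 zero_less_power)
    finally have "D < zp" using zp Dpos by (meson abs_le_square_iff abs_of_pos not_less less_imp_le power_mono)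
    hence "norm (fst p - fst q) / 2 < snd p" using Dpos zp zq P Q by (auto simp: D_def)
    thus ?thesis using pm by blast
  next
    case 3
    have "zq\<^sup>2 = (2*\<mu> - 1) * D\<^sup>2 + zp\<^sup>2" using eqc by (simp add: power2_eq_square algebra_simps)
    also have "\<dots> > D\<^sup>2" using 3 zp Dpos
      by (smt (verit) mult_le_cancel_right1 zero_less_power)
    finally have "D < zq" using zq Dpos by (meson abs_le_square_iff abs_of_pos not_less less_imp_le power_mono)
    hence "norm (fst p - fst q) / 2 < snd q" using Dpos zp zq P Q by (auto simp: D_def)
    thus ?thesis using qm by blast
  next
    case 2
    define R where "R = sqrt ((\<mu> * D)\<^sup>2 + zp\<^sup>2)"
    have R2: "R\<^sup>2 = (\<mu> * D)\<^sup>2 + zp\<^sup>2" unfolding R_def by simp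
    have Rpos: "R > 0" unfolding R_def using zp by (simp add: add_nonneg_pos)
    have "(D/2)\<^sup>2 < R\<^sup>2"
    proof (cases "\<mu> \<ge> 1/2")
      case True
      have "(D/2)\<^sup>2 \<le> (\<mu> * D)\<^sup>2" using True Dpos by (intro power_mono) auto
      thus ?thesis using R2 zp by (smt (verit) zero_less_power)
    next
      case False
      have "(D/2)\<^sup>2 \<le> ((1-\<mu>) * D)\<^sup>2" using False Dpos by (intro power_mono) auto
      thus ?thesis using R2 eqc zq by (smt (verit) zero_less_power)
    qed
    hence RD: "D/2 < R" using Rpos Dpos by (meson less_imp_le not_less power_mono)
    have "(c, R) \<in> geodesic_segment p q"
      by (rule mem[of R \<mu>]) (use Rpos 2 in \<open>auto simp: c_def R2 n1 Dq power_mult_distrib\<close>)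
    thus ?thesis using RD by (intro bexI[of _ "(c, R)"]) (auto simp: P Q D_def)
  qed
qed

theorem mainTheorem10:
  fixes p q t :: "(real^'n) \<times> real" and C :: "((real^'n) \<times> real) set"
  assumes "in_H p" and "in_H q"
    and "t \<in> geodesic_segment p q"
    and "\<forall>s \<in> geodesic_segment p q. snd s \<le> snd t"
    and "C \<in> binary_tiling" and "t \<in> C"
  shows "diameter (fst ` C) > norm (fst p - fst q) / 4"
proof -
  obtain a b where Cd: "C = bin_tile a b" using assms(5) by (auto simp: binary_tiling_def)
  have d: "diameter (fst ` C) \<ge> 2 powi b" unfolding Cd by (rule tile_diam)
  have tz: "snd t \<le> 2 powi b * 2" using assms(6) unfolding Cd bin_tile_def by auto
  show ?thesis
  proof (cases "fst p = fst q")
    case True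
    have "(0::real) < 2 powi b" by simp
    hence "0 < diameter (fst ` C)" using d by linarith
    thus ?thesis using True by simp
  next
    case False
    then obtain s where "s \<in> geodesic_segment p q" "snd s > norm (fst p - fst q) / 2"
      using high_point[OF assms(1,2)] by blast
    hence "snd t > norm (fst p - fst q) / 2" using assms(4) by force
    thus ?thesis using d tz by linarith
  qed
qed

end
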